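(* Let $\mu$ be an infinite cardinal and $T$ an $E^{\mu^+}_{\mathrm{cf}(\mu)}$-coherent streamlined $\mu^+$-tree. Suppose $d:\{b_\delta\mid\delta\in\Delta\}\to\mu^+$ is a function where: $\Delta=D\cap E^{\mu^+}_{\mathrm{cf}(\mu)}$ for some club $D\subseteq\mu^+$; for every $\delta\in\Delta$, $b_\delta\in T_\delta$ and $d(b_\delta)<\delta$; and $d$ is injective on chains (i.e., whenever $\gamma,\delta\in\Delta$ and $b_\gamma\subsetneq b_\delta$, $d(b_\gamma)\ne d(b_\delta)$). Then $T$ is special.
   Context: $E^{\mu^+}_{\mathrm{cf}(\mu)}=\{\alpha<\mu^+\mid\mathrm{cf}(\alpha)=\mathrm{cf}(\mu)\}$. A streamlined $\mu^+$-tree is a set $T$ of functions with domain an ordinal below $\mu^+$ (values in $H_{\mu^+}$), closed under restrictions, such that $(T,\subseteq)$ has height $\mu^+$ and all levels $T_\alpha=\{t\in T\mid\mathrm{dom}(t)=\alpha\}$ have size $\le\mu$. For $S\subseteq\mu^+$, $T$ is $S$-coherent iff for every $\delta\in S$ and all $s,t\in T_\delta$, $\sup\{\gamma<\delta\mid s(\gamma)\ne t(\gamma)\}<\delta$. A $\mu^+$-tree $(T,<_T)$ is special iff there is $f:T\to T$ with $f(x)<_Tx$ for every non-minimal $x$ and each $f^{-1}\{z\}$ covered by at most $\mu$ antichains. *)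

theory Defs
  imports Main
begin

text \<open>Ordinals below mu^+ are the elements of a well-ordered type 'k whose proper initial
segments all have cardinality at most \<mu> but which itself has cardinality greater than \<mu>;
the cardinal \<mu> is an element m of 'k (an infinite initial ordinal).\<close>

definition card_le :: "'a set \<Rightarrow> 'b set \<Rightarrow> bool" where
  "card_le A B \<longleftrightarrow> (card_of A, card_of B) \<in> ordLeq"

definition card_eq :: "'a set \<Rightarrow> 'b set \<Rightarrow> bool" where
  "card_eq A B \<longleftrightarrow> (card_of A, card_of B) \<in> ordIso"

definition is_successor_of :: "'k::wellorder itself \<Rightarrow> 'k \<Rightarrow> bool" where
  "is_successor_of _ m \<longleftrightarrow>
     infinite {..<m} \<and>
     (\<forall>\<beta><m. \<not> card_eq {..<\<beta>} {..<m}) \<and>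
     (\<forall>\<alpha>::'k. card_le {..<\<alpha>} {..<m}) \<and>
     \<not> card_le (UNIV :: 'k set) {..<m}"

definition cofinal_in :: "'k::wellorder set \<Rightarrow> 'k \<Rightarrow> bool" where
  "cofinal_in A \<alpha> \<longleftrightarrow> A \<subseteq> {..<\<alpha>} \<and> (\<forall>\<beta><\<alpha>. \<exists>a\<in>A. \<beta> \<le> a)"

definition cf_witness :: "'k::wellorder \<Rightarrow> 'k set \<Rightarrow> bool" where
  "cf_witness \<alpha> A \<longleftrightarrow> cofinal_in A \<alpha> \<and> (\<forall>B. cofinal_in B \<alpha> \<longrightarrow> card_le A B)"

definition same_cf :: "'k::wellorder \<Rightarrow> 'k \<Rightarrow> bool" where
  "same_cf \<alpha> \<beta> \<longleftrightarrow> (\<exists>A B. cf_witness \<alpha> A \<and> cf_witness \<beta> B \<and> card_eq A B)"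

definition E_cf :: "'k::wellorder \<Rightarrow> 'k set" where
  "E_cf m = {\<alpha>. same_cf \<alpha> m}"

definition club :: "'k::wellorder set \<Rightarrow> bool" where
  "club D \<longleftrightarrow> (\<forall>\<alpha>. \<exists>\<delta>\<in>D. \<alpha> \<le> \<delta>) \<and>
     (\<forall>\<alpha>. (\<exists>\<beta>. \<beta> < \<alpha>) \<and> (\<forall>\<beta><\<alpha>. \<exists>\<delta>\<in>D. \<beta> < \<delta> \<and> \<delta> < \<alpha>) \<longrightarrow> \<alpha> \<in> D)"

definition level :: "('k::wellorder \<rightharpoonup> 'v) set \<Rightarrow> 'k \<Rightarrow> ('k \<rightharpoonup> 'v) set" where
  "level T \<alpha> = {t\<in>T. dom t = {..<\<alpha>}}"

definition streamlined_tree :: "'k::wellorder \<Rightarrow> ('k \<rightharpoonup> 'v) set \<Rightarrow> bool" where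
  "streamlined_tree m T \<longleftrightarrow>
     (\<forall>t\<in>T. \<exists>\<alpha>. dom t = {..<\<alpha>}) \<and>
     (\<forall>t\<in>T. \<forall>\<alpha>. t |` {..<\<alpha>} \<in> T) \<and>
     (\<forall>\<alpha>. level T \<alpha> \<noteq> {}) \<and>
     (\<forall>\<alpha>. card_le (level T \<alpha>) {..<m})"

definition coherent :: "'k::wellorder set \<Rightarrow> ('k \<rightharpoonup> 'v) set \<Rightarrow> bool" where
  "coherent S T \<longleftrightarrow> (\<forall>\<delta>\<in>S. \<forall>s\<in>level T \<delta>. \<forall>t\<in>level T \<delta>.
      \<exists>\<beta><\<delta>. \<forall>\<gamma><\<delta>. s \<gamma> \<noteq> t \<gamma> \<longrightarrow> \<gamma> \<le> \<beta>)"

definition strict_map_le :: "('a \<rightharpoonup> 'b) \<Rightarrow> ('a \<rightharpoonup> 'b) \<Rightarrow> bool" where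
  "strict_map_le s t \<longleftrightarrow> s \<subseteq>\<^sub>m t \<and> s \<noteq> t"

definition antichain_in :: "('a \<rightharpoonup> 'b) set \<Rightarrow> ('a \<rightharpoonup> 'b) set \<Rightarrow> bool" where
  "antichain_in T A \<longleftrightarrow> A \<subseteq> T \<and> (\<forall>x\<in>A. \<forall>y\<in>A. \<not> strict_map_le x y)"

definition special :: "'k::wellorder \<Rightarrow> ('k \<rightharpoonup> 'v) set \<Rightarrow> bool" where
  "special m T \<longleftrightarrow> (\<exists>f. (\<forall>x\<in>T. f x \<in> T) \<and>
     (\<forall>x\<in>T. (\<exists>y\<in>T. strict_map_le y x) \<longrightarrow> strict_map_le (f x) x) \<and>
     (\<forall>z\<in>T. \<exists>\<A>. card_le \<A> {..<m} \<and> (\<forall>A\<in>\<A>. antichain_in T A) \<and>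
        {x\<in>T. f x = z} \<subseteq> \<Union>\<A>))"

end

theory Submission
  imports Defs
begin

unbundle cardinal_syntax


lemma WO: "Well_order {(a,b::'k::wellorder). a \<le> b}"
  unfolding well_order_on_def linear_order_on_def partial_order_on_def preorder_on_def
    refl_on_def trans_def antisym_def total_on_def
  apply (auto simp: Field_def)
  apply (rule wf_subset[OF wf]) apply auto
  done

lemma lessThan_inj: "{..<a} = {..<b::'k::wellorder} \<Longrightarrow> a = b"
  by (metis lessThan_iff linorder_neqE order_less_irrefl)

definition ht :: "('k::wellorder \<rightharpoonup> 'v) \<Rightarrow> 'k" where
  "ht t = (LEAST a. dom t = {..<a})"

lemma ht_eq: "dom t = {..<a} \<Longrightarrow> ht t = a"
  unfolding ht_def by (rule Least_equality) (auto dest: lessThan_inj)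

lemma finless: "finite A \<Longrightarrow> infinite B \<Longrightarrow> |A| <o |B|"
  using finite_ordLess_infinite[OF card_of_Well_order card_of_Well_order] by (simp add: Field_card_of)

locale L28 =
  fixes m :: "'k::wellorder" and T :: "('k \<rightharpoonup> 'v) set" and D :: "'k set"
    and b :: "'k \<Rightarrow> ('k \<rightharpoonup> 'v)" and d :: "('k \<rightharpoonup> 'v) \<Rightarrow> 'k"
  assumes succ: "is_successor_of TYPE('k) m"
    and str: "streamlined_tree m T"
    and coh: "coherent (E_cf m) T"
    and clb: "club D"
    and bd: "\<And>\<delta>. \<delta> \<in> D \<inter> E_cf m \<Longrightarrow> b \<delta> \<in> level T \<delta> \<and> d (b \<delta>) < \<delta>"
    and dinj: "\<And>\<gamma> \<delta>. \<gamma> \<in> D \<inter> E_cf m \<Longrightarrow> \<delta> \<in> D \<inter> E_cf m \<Longrightarrow>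
           strict_map_le (b \<gamma>) (b \<delta>) \<Longrightarrow> d (b \<gamma>) \<noteq> d (b \<delta>)"
begin

lemma T_dom: "t \<in> T \<Longrightarrow> dom t = {..<ht t}"
  using str unfolding streamlined_tree_def by (metis ht_eq)

lemma T_restr: "t \<in> T \<Longrightarrow> t |` {..<a} \<in> T"
  using str unfolding streamlined_tree_def by blast

lemma ht_restr: "t \<in> T \<Longrightarrow> a \<le> ht t \<Longrightarrow> ht (t |` {..<a}) = a"
  apply (rule ht_eq) using T_dom[of t] by auto

lemma restr_restr: assumes "(a::'k) \<le> a'" shows "(y |` {..<a'}) |` {..<a} = y |` {..<a}"
proof
  fix x show "((y |` {..<a'}) |` {..<a}) x = (y |` {..<a}) x"
  proof (cases "x < a")
    case True
    then have "x < a'" using assms by (rule order_less_le_trans)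
    then show ?thesis using True by simp
  qed simp
qed

lemma T_none: "t \<in> T \<Longrightarrow> \<not> a < ht t \<Longrightarrow> t a = None"
  using T_dom by (metis domIff lessThan_iff)

lemma T_restr_ht: assumes "t \<in> T" shows "t |` {..<ht t} = t"
proof
  fix x show "(t |` {..<ht t}) x = t x" using T_none[OF assms, of x] by (cases "x < ht t") auto
qed

lemma sml_D: assumes "x \<in> T" "y \<in> T" "strict_map_le x y"
  shows "ht x < ht y \<and> x = y |` {..<ht x}"
proof -
  have le: "x \<subseteq>\<^sub>m y" and ne: "x \<noteq> y" using assms(3) by (auto simp: strict_map_le_def)
  have "dom x \<subseteq> dom y" using le by (simp add: map_le_implies_dom_le)
  hence hle: "ht x \<le> ht y" using T_dom[OF assms(1)] T_dom[OF assms(2)]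
    by simp
  have eq: "x = y |` {..<ht x}"
  proof
    fix a show "x a = (y |` {..<ht x}) a"
    proof (cases "a < ht x")
      case True
      then have "a \<in> dom x" using T_dom[OF assms(1)] by auto
      then show ?thesis using le True by (auto simp: map_le_def)
    next
      case False
      then have "a \<notin> dom x" using T_dom[OF assms(1)] by auto
      then show ?thesis using False by auto
    qed
  qed
  have "ht x \<noteq> ht y"
  proof
    assume "ht x = ht y"
    then have "y |` {..<ht x} = y" using T_restr_ht[OF assms(2)] by simp
    then show False using eq ne by simp
  qed
  then have "ht x < ht y" using hle by simp
  from this eq show ?thesis by (rule conjI)
qed

lemma restr_sml: assumes "y \<in> T" "a < a'" "a' \<le> ht y"
  shows "strict_map_le (y |` {..<a}) (y |` {..<a'})"
proof -
  have "y |` {..<a} \<subseteq>\<^sub>m y |` {..<a'}" using assms(2)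
    by (auto simp: map_le_def restrict_map_def)
  moreover have "ht (y |` {..<a}) \<noteq> ht (y |` {..<a'})"
    using ht_restr[OF assms(1), of a] ht_restr[OF assms(1), of a'] assms by simp
  ultimately show ?thesis by (auto simp: strict_map_le_def)
qed

lemma level_iff: "t \<in> level T a \<longleftrightarrow> t \<in> T \<and> ht t = a"
  unfolding level_def using T_dom ht_eq by auto

lemma m_inf: "infinite {..<m}" using succ unfolding is_successor_of_def by blast
lemma m_card: "\<beta> < m \<Longrightarrow> \<not> card_eq {..<\<beta>} {..<m}" using succ unfolding is_successor_of_def by blast
lemma all_le: "|{..<(\<alpha>::'k)}| \<le>o |{..<m}|" using succ unfolding is_successor_of_def card_le_def by blast

lemma less_m: "\<beta> < m \<Longrightarrow> |{..<\<beta>}| <o |{..<m}|"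
  using all_le[of \<beta>] m_card[of \<beta>] unfolding card_eq_def
  using ordLeq_iff_ordLess_or_ordIso by blast

lemma m_pos: "\<exists>a. a < m"
proof (rule ccontr)
  assume "\<not> ?thesis" then have "{..<m} = {}" by auto
  then show False using m_inf by simp
qed

lemma m_lim: assumes "\<beta> < m" shows "\<exists>\<gamma>. \<beta> < \<gamma> \<and> \<gamma> < m"
proof (rule ccontr)
  assume "\<not> ?thesis"
  then have nex: "\<And>\<gamma>. \<beta> < \<gamma> \<Longrightarrow> \<not> \<gamma> < m" by blast
  have eq: "{..<m} = {..<\<beta>} \<union> {\<beta>}"
  proof (rule set_eqI)
    fix x show "x \<in> {..<m} \<longleftrightarrow> x \<in> {..<\<beta>} \<union> {\<beta>}"
      using assms nex[of x] by (cases x \<beta> rule: linorder_cases) auto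
  qed
  have lt: "|{..<\<beta>} \<union> {\<beta>}| <o |{..<m}|"
    by (rule card_of_Un_ordLess_infinite[OF m_inf less_m[OF assms]]) (rule finless, auto simp: m_inf)
  from lt show False unfolding eq[symmetric] by (simp add: ordLess_irreflexive)
qed

end

context L28 begin

lemma B_ex: "\<exists>B. cf_witness m B"
proof -
  let ?R = "{|A| | A. cofinal_in A m}"
  have "cofinal_in {..<m} m" unfolding cofinal_in_def by auto
  hence ne: "?R \<noteq> {}" by auto
  have "\<forall>r\<in>?R. Well_order r" using card_of_Well_order by auto
  from exists_minim_Well_order[OF ne this] obtain r where "r \<in> ?R" "\<forall>r'\<in>?R. r \<le>o r'" by blast
  then obtain A where "cofinal_in A m" "\<forall>A'. cofinal_in A' m \<longrightarrow> |A| \<le>o |A'|" by blast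
  thus ?thesis unfolding cf_witness_def card_le_def by blast
qed

definition "Bw = (SOME B. cf_witness m B)"
lemma Bw: "cf_witness m Bw" unfolding Bw_def using B_ex by (rule someI_ex)
lemma Bw_sub: "Bw \<subseteq> {..<m}" using Bw unfolding cf_witness_def cofinal_in_def by blast
lemma Bw_min: "cofinal_in A m \<Longrightarrow> |Bw| \<le>o |A|" using Bw unfolding cf_witness_def card_le_def by blast
lemma Bw_cover: assumes "\<eta> < m" shows "\<exists>bb\<in>Bw. \<eta> < bb"
proof -
  obtain \<gamma> where g: "\<eta> < \<gamma>" "\<gamma> < m" using m_lim[OF assms] by blast
  then obtain bb where "bb \<in> Bw" "\<gamma> \<le> bb" using Bw unfolding cf_witness_def cofinal_in_def by blast
  thus ?thesis using g by (meson order_less_le_trans)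
qed

lemma enc_ex: "\<exists>f::(nat \<times> 'k \<times> 'k \<times> 'k) \<Rightarrow> 'k. inj_on f (UNIV \<times> {..<m} \<times> {..<m} \<times> {..<m}) \<and>
   f ` (UNIV \<times> {..<m} \<times> {..<m} \<times> {..<m}) \<subseteq> {..<m}"
proof -
  let ?X = "{..<m}"
  have XX: "|?X \<times> ?X| \<le>o |?X|" using card_of_Times_same_infinite[OF m_inf] ordIso_iff_ordLeq by blast
  have "|?X \<times> ?X \<times> ?X| \<le>o |?X \<times> ?X|" using card_of_Times_mono2[OF XX] .
  hence X3: "|?X \<times> ?X \<times> ?X| \<le>o |?X|" using XX ordLeq_transitive by blast
  have N: "|UNIV::nat set| \<le>o |?X|" using infinite_iff_card_of_nat m_inf by blast
  have a1: "|(UNIV::nat set) \<times> (?X \<times> ?X \<times> ?X)| \<le>o |?X \<times> (?X \<times> ?X \<times> ?X)|" using card_of_Times_mono1[OF N] .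
  have a2: "|?X \<times> (?X \<times> ?X \<times> ?X)| \<le>o |?X \<times> ?X|" using card_of_Times_mono2[OF X3] .
  have "|(UNIV::nat set) \<times> (?X \<times> ?X \<times> ?X)| \<le>o |?X|" using ordLeq_transitive[OF ordLeq_transitive[OF a1 a2] XX] .
  thus ?thesis unfolding card_of_ordLeq[symmetric] by blast
qed

definition "enc0 = (SOME f::(nat \<times> 'k \<times> 'k \<times> 'k) \<Rightarrow> 'k. inj_on f (UNIV \<times> {..<m} \<times> {..<m} \<times> {..<m}) \<and>
   f ` (UNIV \<times> {..<m} \<times> {..<m} \<times> {..<m}) \<subseteq> {..<m})"
lemma enc0: "inj_on enc0 (UNIV \<times> {..<m} \<times> {..<m} \<times> {..<m}) \<and>
   enc0 ` (UNIV \<times> {..<m} \<times> {..<m} \<times> {..<m}) \<subseteq> {..<m}"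
  unfolding enc0_def using enc_ex by (rule someI_ex)

definition "a0 = (LEAST a::'k. True)"
lemma a0: "a0 < m"
proof -
  obtain a where "a < m" using m_pos by blast
  moreover have "a0 \<le> a" unfolding a0_def by (rule Least_le) simp
  ultimately show ?thesis by simp
qed

definition "clip a = (if a < m then a else a0)"
lemma clip: "clip a < m" using a0 by (simp add: clip_def)

definition "ENC n a p q = enc0 (n, clip a, clip p, clip q)"
lemma ENC_lt: "ENC n a p q < m"
  using enc0 clip unfolding ENC_def by blast

lemma ENC_inj: assumes "ENC n a p q = ENC n' a' p' q'" "a<m" "p<m" "q<m" "a'<m" "p'<m" "q'<m"
  shows "n=n' \<and> a=a' \<and> p=p' \<and> q=q'"
proof -
  have "(n, clip a, clip p, clip q) = (n', clip a', clip p', clip q')"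
    using enc0 assms(1) clip unfolding ENC_def inj_on_def by blast
  thus ?thesis using assms by (simp add: clip_def)
qed

definition "e \<gamma> = (SOME f::'k \<Rightarrow> 'k. inj_on f {..<\<gamma>} \<and> f ` {..<\<gamma>} \<subseteq> {..<m})"
lemma e: "inj_on (e \<gamma>) {..<\<gamma>} \<and> e \<gamma> ` {..<\<gamma>} \<subseteq> {..<m}"
proof -
  have "\<exists>f::'k \<Rightarrow> 'k. inj_on f {..<\<gamma>} \<and> f ` {..<\<gamma>} \<subseteq> {..<m}"
    using all_le[of \<gamma>] card_of_ordLeq by blast
  thus ?thesis unfolding e_def by (rule someI_ex)
qed

definition "idx \<gamma> = (SOME f::('k \<rightharpoonup> 'v) \<Rightarrow> 'k. inj_on f (level T \<gamma>) \<and> f ` (level T \<gamma>) \<subseteq> {..<m})"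
lemma idx: "inj_on (idx \<gamma>) (level T \<gamma>) \<and> idx \<gamma> ` (level T \<gamma>) \<subseteq> {..<m}"
proof -
  have "|level T \<gamma>| \<le>o |{..<m}|" using str unfolding streamlined_tree_def card_le_def by blast
  hence "\<exists>f::('k \<rightharpoonup> 'v) \<Rightarrow> 'k. inj_on f (level T \<gamma>) \<and> f ` (level T \<gamma>) \<subseteq> {..<m}"
    using card_of_ordLeq by blast
  thus ?thesis unfolding idx_def by (rule someI_ex)
qed

definition "rZ Z = {(a,c::'k). a \<in> Z \<and> c \<in> Z \<and> a \<le> c}"
lemma rZ_WO: "Well_order (rZ Z)"
proof -
  have "rZ Z = Restr {(a,c). a \<le> c} Z" by (auto simp: rZ_def)
  thus ?thesis using Well_order_Restr[OF WO] by simp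
qed
lemma rZ_Field: "Field (rZ Z) = Z" by (auto simp: Field_def rZ_def)

definition "Lm = rZ {..<m}"
definition "otc Z = (SOME \<zeta>. \<zeta> \<in> Field Lm \<and> rZ Z =o Restr Lm (underS Lm \<zeta>))"

lemma otc_ex: assumes "|Z| <o |{..<m}|" shows "rZ Z =o Restr Lm (underS Lm (otc Z)) \<and> otc Z < m"
proof -
  have "rZ Z <o Lm"
  proof (rule ccontr)
    assume "\<not> rZ Z <o Lm"
    hence "Lm \<le>o rZ Z" using not_ordLess_iff_ordLeq[OF rZ_WO rZ_WO] unfolding Lm_def by blast
    hence "|Field Lm| \<le>o |Field (rZ Z)|" by (rule card_of_mono2)
    hence "|{..<m}| \<le>o |Z|" by (simp add: Lm_def rZ_Field)
    thus False using assms not_ordLess_ordLeq by blast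
  qed
  then have "\<exists>\<zeta>. \<zeta> \<in> Field Lm \<and> rZ Z =o Restr Lm (underS Lm \<zeta>)"
    using ordLess_iff_ordIso_Restr[OF rZ_WO[of "{..<m}"] rZ_WO[of Z]] unfolding Lm_def by blast
  then have "otc Z \<in> Field Lm \<and> rZ Z =o Restr Lm (underS Lm (otc Z))"
    unfolding otc_def by (rule someI_ex)
  thus ?thesis by (simp add: Lm_def rZ_Field)
qed

lemma otc_neq: assumes "|Z'| <o |{..<m}|" "z0 \<in> Z'" "Z = {z\<in>Z'. z < z0}" shows "otc Z \<noteq> otc Z'"
proof
  have "Z \<subseteq> Z'" using assms by auto
  hence Zlt: "|Z| <o |{..<m}|" using card_of_mono1 assms(1) ordLeq_ordLess_trans by blast
  have "Restr (rZ Z') (underS (rZ Z') z0) = rZ Z"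
    using assms(2,3) by (auto simp: rZ_def underS_def)
  hence "rZ Z =o Restr (rZ Z') (underS (rZ Z') z0)" using ordIso_reflexive[OF rZ_WO] by simp
  hence lt: "rZ Z <o rZ Z'"
    using ordLess_iff_ordIso_Restr[OF rZ_WO rZ_WO] assms(2) rZ_Field by blast
  assume eq: "otc Z = otc Z'"
  have "rZ Z =o rZ Z'" using otc_ex[OF Zlt] otc_ex[OF assms(1)] eq
    by (metis ordIso_symmetric ordIso_transitive)
  thus False using lt not_ordLess_ordIso by blast
qed

lemma E_lemma:
  assumes colm: "\<forall>\<xi><h. col \<xi> < m"
    and nc: "\<forall>bb\<in>Bw. \<not> cofinal_in {\<xi>. \<xi><h \<and> col \<xi> < bb} h"
  shows "h \<in> E_cf m \<and> (\<forall>\<beta><h. \<exists>\<gamma>. \<beta><\<gamma> \<and> \<gamma><h)"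
proof -
  define Z where "Z bb = {\<xi>. \<xi><h \<and> col \<xi> < bb}" for bb
  have "\<forall>bb\<in>Bw. \<exists>\<beta>. \<beta><h \<and> (\<forall>a\<in>Z bb. a < \<beta>)"
  proof
    fix bb assume "bb\<in>Bw"
    hence "\<not> cofinal_in (Z bb) h" using nc Z_def by simp
    moreover have "Z bb \<subseteq> {..<h}" by (auto simp: Z_def)
    ultimately show "\<exists>\<beta>. \<beta><h \<and> (\<forall>a\<in>Z bb. a < \<beta>)" unfolding cofinal_in_def by (auto simp: not_le)
  qed
  then obtain \<rho> where \<rho>: "\<forall>bb\<in>Bw. \<rho> bb < h \<and> (\<forall>a\<in>Z bb. a < \<rho> bb)" by metis
  have cov: "\<exists>bb\<in>Bw. \<xi> < \<rho> bb" if "\<xi> < h" for \<xi>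
  proof -
    have "col \<xi> < m" using colm that by blast
    then obtain bb where "bb \<in> Bw" "col \<xi> < bb" using Bw_cover by blast
    thus ?thesis using \<rho> that by (auto simp: Z_def)
  qed
  let ?R = "\<rho> ` Bw"
  have Rcof: "cofinal_in ?R h" unfolding cofinal_in_def using \<rho> cov by (force simp: less_imp_le)
  have lim: "\<forall>\<beta><h. \<exists>\<gamma>. \<beta><\<gamma> \<and> \<gamma><h" using cov \<rho> by blast
  have key: "|Bw| \<le>o |A|" if A: "cofinal_in A h" for A
  proof -
    define sel where "sel a = (SOME bb. bb\<in>Bw \<and> col a < bb)" for a
    have Fp: "sel a \<in> Bw \<and> col a < sel a" if "a \<in> A" for a
    proof -
      have "a < h" using A that unfolding cofinal_in_def by auto
      hence "\<exists>bb. bb\<in>Bw \<and> col a < bb" using Bw_cover colm by blast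
      thus ?thesis unfolding sel_def by (rule someI_ex)
    qed
    have "cofinal_in (sel ` A) m"
      unfolding cofinal_in_def
    proof (intro conjI allI impI)
      show "sel ` A \<subseteq> {..<m}" using Fp Bw_sub by blast
      fix \<eta> assume "\<eta> < m"
      show "\<exists>a\<in>sel ` A. \<eta> \<le> a"
      proof (rule ccontr)
        assume "\<not> ?thesis"
        hence small: "\<forall>a\<in>A. sel a < \<eta>" by (auto simp: not_le)
        obtain bb where bb: "bb \<in> Bw" "\<eta> \<le> bb" using Bw \<open>\<eta> < m\<close> unfolding cf_witness_def cofinal_in_def by blast
        have "A \<subseteq> Z bb"
        proof
          fix a assume "a \<in> A"
          hence "a < h" "col a < sel a" using A Fp unfolding cofinal_in_def by auto
          moreover have "sel a < bb" using small \<open>a\<in>A\<close> bb by (meson order_less_le_trans)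
          ultimately show "a \<in> Z bb" by (auto simp: Z_def)
        qed
        hence "cofinal_in (Z bb) h" using A unfolding cofinal_in_def Z_def by blast
        thus False using nc bb Z_def by simp
      qed
    qed
    hence "|Bw| \<le>o |sel ` A|" by (rule Bw_min)
    thus ?thesis using card_of_image ordLeq_transitive by blast
  qed
  have Rle: "|?R| \<le>o |Bw|" by (rule card_of_image)
  have w: "cf_witness h ?R" unfolding cf_witness_def card_le_def using Rcof key Rle ordLeq_transitive by blast
  have "card_eq ?R Bw" unfolding card_eq_def using Rle key[OF Rcof] ordIso_iff_ordLeq by blast
  hence "same_cf h m" unfolding same_cf_def using w Bw by blast
  thus ?thesis using lim by (simp add: E_cf_def)
qed

end

context L28 begin

definition "Rel = inv_image {(a,c::'k). a < c} (ht :: ('k \<rightharpoonup> 'v) \<Rightarrow> 'k)"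
lemma wfRel: "wf Rel" unfolding Rel_def by (rule wf_inv_image[OF wf])

definition "sig h = (LEAST s. \<forall>\<delta>\<in>D. \<delta> < h \<longrightarrow> \<delta> \<le> s)"
definition "Mx h = (LEAST \<delta>. \<delta> \<in> D \<and> h \<le> \<delta>)"
definition "Zs col h bb = {\<xi>. \<xi> < h \<and> col \<xi> < bb}"
definition "bsel col h = (SOME bb. bb \<in> Bw \<and> cofinal_in (Zs col h bb) h)"
definition "bet x = (SOME \<beta>. \<beta> < ht x \<and> (\<forall>\<gamma><ht x. x \<gamma> \<noteq> b (ht x) \<gamma> \<longrightarrow> \<gamma> \<le> \<beta>))"
definition "gam x = (SOME \<gamma>. bet x < \<gamma> \<and> d (b (ht x)) < \<gamma> \<and> \<gamma> < ht x)"

definition tg :: "('k \<Rightarrow> 'k) \<Rightarrow> ('k \<rightharpoonup> 'v) \<Rightarrow> nat" where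
 "tg col x = (if ht x \<notin> D then (if \<exists>\<delta>\<in>D. \<delta> < ht x then 0 else 1)
   else if \<exists>bb\<in>Bw. cofinal_in (Zs col (ht x) bb) (ht x) then 2 else 3)"

definition A1 :: "('k \<Rightarrow> 'k) \<Rightarrow> ('k \<rightharpoonup> 'v) \<Rightarrow> 'k" where
 "A1 col x = (if tg col x = 0 then col (sig (ht x)) else if tg col x = 1 then a0
    else if tg col x = 2 then bsel col (ht x) else col (gam x))"
definition A2 :: "('k \<Rightarrow> 'k) \<Rightarrow> ('k \<rightharpoonup> 'v) \<Rightarrow> 'k" where
 "A2 col x = (if tg col x \<le> 1 then e (Mx (ht x)) (ht x)
    else if tg col x = 2 then otc (Zs col (ht x) (bsel col (ht x))) else e (gam x) (d (b (ht x))))"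
definition A3 :: "('k \<Rightarrow> 'k) \<Rightarrow> ('k \<rightharpoonup> 'v) \<Rightarrow> 'k" where
 "A3 col x = (if tg col x = 3 then idx (gam x) (b (ht x) |` {..<gam x}) else a0)"

definition "Hcol col x = ENC (tg col x) (A1 col x) (A2 col x) (A3 col x)"
definition "Hc g x = Hcol (\<lambda>\<xi>. if \<xi> < ht x then g (x |` {..<\<xi>}) else a0) x"
definition "c = wfrec Rel Hc"
definition "colc x \<xi> = (if \<xi> < ht x then c (x |` {..<\<xi>}) else a0)"

lemma c_eq: assumes "x \<in> T" shows "c x = Hcol (colc x) x"
proof -
  have "c x = Hc (cut c Rel x) x" unfolding c_def by (rule wfrec[OF wfRel])
  also have "(\<lambda>\<xi>. if \<xi> < ht x then cut c Rel x (x |` {..<\<xi>}) else a0) = colc x"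
  proof
    fix \<xi> show "(if \<xi> < ht x then cut c Rel x (x |` {..<\<xi>}) else a0) = colc x \<xi>"
    proof (cases "\<xi> < ht x")
      case True
      then have "(x |` {..<\<xi>}, x) \<in> Rel" using ht_restr[OF assms, of \<xi>] by (simp add: Rel_def)
      then show ?thesis using True by (simp add: colc_def cut_apply)
    qed (simp add: colc_def)
  qed
  hence "Hc (cut c Rel x) x = Hcol (colc x) x" unfolding Hc_def by simp
  finally show ?thesis .
qed

lemma c_lt: "x \<in> T \<Longrightarrow> c x < m" by (simp add: c_eq Hcol_def ENC_lt)

lemma colc_lt: "x \<in> T \<Longrightarrow> colc x \<xi> < m"
  by (simp add: colc_def c_lt T_restr a0)

lemma Mx_prop: "Mx h \<in> D \<and> h \<le> Mx h"
proof -
  have "\<exists>\<delta>. \<delta> \<in> D \<and> h \<le> \<delta>" using clb unfolding club_def by blast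
  thus ?thesis unfolding Mx_def by (rule LeastI_ex)
qed
lemma Mx_least: "\<delta> \<in> D \<Longrightarrow> h \<le> \<delta> \<Longrightarrow> Mx h \<le> \<delta>" unfolding Mx_def by (rule Least_le) simp

lemma sig_ub: "\<delta> \<in> D \<Longrightarrow> \<delta> < h \<Longrightarrow> \<delta> \<le> sig h"
proof -
  have "\<forall>\<delta>\<in>D. \<delta> < h \<longrightarrow> \<delta> \<le> sig h" unfolding sig_def
    by (rule LeastI[of _ h]) auto
  thus "\<delta> \<in> D \<Longrightarrow> \<delta> < h \<Longrightarrow> \<delta> \<le> sig h" by blast
qed

lemma sig_lt: assumes "h \<notin> D" "\<exists>\<delta>\<in>D. \<delta> < h" shows "sig h < h"
proof -
  have le: "sig h \<le> h" unfolding sig_def by (rule Least_le) auto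
  have "sig h \<noteq> h"
  proof
    assume eq: "sig h = h"
    have "\<forall>\<beta><h. \<exists>\<delta>\<in>D. \<beta> < \<delta> \<and> \<delta> < h"
    proof (intro allI impI)
      fix \<beta> assume "\<beta> < h"
      hence "\<beta> < sig h" using eq by simp
      hence "\<not> (\<forall>\<delta>\<in>D. \<delta> < h \<longrightarrow> \<delta> \<le> \<beta>)" unfolding sig_def by (rule not_less_Least)
      thus "\<exists>\<delta>\<in>D. \<beta> < \<delta> \<and> \<delta> < h" by (auto simp: not_le)
    qed
    moreover have "\<exists>\<beta>. \<beta> < h" using assms(2) by blast
    ultimately have "h \<in> D" using clb unfolding club_def by blast
    thus False using assms(1) by simp
  qed
  thus ?thesis using le by simp
qed

lemma M_contra: assumes "hx < hy" "\<not> (\<exists>\<delta>\<in>D. hx \<le> \<delta> \<and> \<delta> < hy)" "hx \<notin> D" "hy \<notin> D"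
  "e (Mx hx) hx = e (Mx hy) hy" shows False
proof -
  have "Mx hx \<le> Mx hy" using Mx_prop[of hy] assms(1) by (intro Mx_least) auto
  moreover have "hy \<le> Mx hx" using Mx_prop[of hx] assms(2) by (auto simp: not_le) 
  hence "Mx hy \<le> Mx hx" using Mx_prop[of hx] by (intro Mx_least) auto
  ultimately have M: "Mx hx = Mx hy" by simp
  have "hx < Mx hx" using Mx_prop[of hx] assms(3) by (metis order_le_less)
  moreover have "hy < Mx hx" using Mx_prop[of hy] assms(4) M by (metis order_le_less)
  ultimately have "hx = hy" using e[of "Mx hx"] assms(5) M unfolding inj_on_def by auto
  thus False using assms(1) by simp
qed

lemma tag3: assumes "z \<in> T" "tg (colc z) z = 3"
  shows "ht z \<in> D \<inter> E_cf m \<and> (\<forall>\<beta><ht z. \<exists>\<gamma>. \<beta><\<gamma> \<and> \<gamma><ht z)"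
proof -
  have D: "ht z \<in> D" and nc: "\<forall>bb\<in>Bw. \<not> cofinal_in (Zs (colc z) (ht z) bb) (ht z)"
    using assms(2) unfolding tg_def by (auto split: if_splits)
  have "ht z \<in> E_cf m \<and> (\<forall>\<beta><ht z. \<exists>\<gamma>. \<beta><\<gamma> \<and> \<gamma><ht z)"
    by (rule E_lemma[of "ht z" "colc z"]) (use colc_lt[OF assms(1)] nc in \<open>auto simp: Zs_def\<close>)
  thus ?thesis using D by simp
qed

lemma gam_props: assumes "z \<in> T" "tg (colc z) z = 3"
  shows "bet z < gam z \<and> d (b (ht z)) < gam z \<and> gam z < ht z \<and>
    (\<forall>\<gamma><ht z. z \<gamma> \<noteq> b (ht z) \<gamma> \<longrightarrow> \<gamma> \<le> bet z)"
proof -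
  note t3 = tag3[OF assms]
  let ?h = "ht z"
  have bz: "b ?h \<in> level T ?h \<and> d (b ?h) < ?h" using bd t3 by blast
  have zl: "z \<in> level T ?h" using assms(1) level_iff by blast
  have "\<exists>\<beta><?h. \<forall>\<gamma><?h. z \<gamma> \<noteq> b ?h \<gamma> \<longrightarrow> \<gamma> \<le> \<beta>"
    using coh t3 bz zl unfolding coherent_def by blast
  hence bt: "bet z < ?h \<and> (\<forall>\<gamma><?h. z \<gamma> \<noteq> b ?h \<gamma> \<longrightarrow> \<gamma> \<le> bet z)"
    unfolding bet_def by (rule someI_ex[where P = "\<lambda>\<beta>. \<beta> < ?h \<and> (\<forall>\<gamma><?h. z \<gamma> \<noteq> b ?h \<gamma> \<longrightarrow> \<gamma> \<le> \<beta>)"])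
  have "max (bet z) (d (b ?h)) < ?h" using bt bz by simp
  then obtain \<gamma> where "max (bet z) (d (b ?h)) < \<gamma>" "\<gamma> < ?h" using t3 by blast
  hence "\<exists>\<gamma>. bet z < \<gamma> \<and> d (b ?h) < \<gamma> \<and> \<gamma> < ?h" by auto
  hence "bet z < gam z \<and> d (b ?h) < gam z \<and> gam z < ?h" unfolding gam_def by (rule someI_ex)
  thus ?thesis using bt by blast
qed

end

context L28 begin

lemma Zs_small: assumes zT: "z \<in> T" and inj: "inj_on (\<lambda>\<xi>. c (z |` {..<\<xi>})) {..<ht z}" and "bb < m"
  shows "|Zs (colc z) (ht z) bb| <o |{..<m}|"
proof -
  let ?Z = "Zs (colc z) (ht z) bb"
  have sub: "?Z \<subseteq> {..<ht z}" by (auto simp: Zs_def)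
  have "inj_on (\<lambda>\<xi>. c (z |` {..<\<xi>})) ?Z" using inj_on_subset[OF inj sub] .
  moreover have "(\<lambda>\<xi>. c (z |` {..<\<xi>})) ` ?Z \<subseteq> {..<bb}" by (auto simp: Zs_def colc_def)
  ultimately have "|?Z| \<le>o |{..<bb}|" using card_of_ordLeq by blast
  thus ?thesis using less_m[OF assms(3)] ordLeq_ordLess_trans by blast
qed

lemma bsel_prop: assumes "tg col x = 2"
  shows "bsel col (ht x) \<in> Bw \<and> cofinal_in (Zs col (ht x) (bsel col (ht x))) (ht x)"
proof -
  have "\<exists>bb. bb\<in>Bw \<and> cofinal_in (Zs col (ht x) bb) (ht x)" using assms unfolding tg_def by (auto split: if_splits)
  thus ?thesis unfolding bsel_def by (rule someI_ex)
qed

lemma tg_cases: "tg col x = 0 \<or> tg col x = 1 \<or> tg col x = 2 \<or> tg col x = 3"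
  unfolding tg_def by auto

lemma tg01: "tg col x \<le> 1 \<Longrightarrow> ht x \<notin> D" unfolding tg_def by (auto split: if_splits)

lemma comps_lt: assumes zT: "z \<in> T" and inj: "inj_on (\<lambda>\<xi>. c (z |` {..<\<xi>})) {..<ht z}"
  shows "A1 (colc z) z < m \<and> A2 (colc z) z < m \<and> A3 (colc z) z < m"
proof -
  let ?h = "ht z"
  have a1: "A1 (colc z) z < m"
    using colc_lt[OF zT] a0 bsel_prop[of "colc z" z] Bw_sub unfolding A1_def by auto
  have a3: "A3 (colc z) z < m"
  proof (cases "tg (colc z) z = 3")
    case True
    note g = gam_props[OF zT True]
    have "b ?h \<in> level T ?h" using bd tag3[OF zT True] by blast
    hence bT: "b ?h \<in> T" "ht (b ?h) = ?h" using level_iff by auto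
    have "b ?h |` {..<gam z} \<in> level T (gam z)"
      using level_iff T_restr[OF bT(1)] ht_restr[OF bT(1)] g bT(2) by (simp add: less_imp_le)
    thus ?thesis using True idx[of "gam z"] unfolding A3_def by auto
  qed (simp add: A3_def a0)
  have a2: "A2 (colc z) z < m"
  proof (cases "tg (colc z) z \<le> 1")
    case True
    have "?h \<notin> D" using tg01[OF True] .
    hence "?h < Mx ?h" using Mx_prop[of ?h] by (metis order_le_less)
    thus ?thesis using True e[of "Mx ?h"] unfolding A2_def by auto
  next
    case False
    show ?thesis
    proof (cases "tg (colc z) z = 2")
      case True
      have "bsel (colc z) ?h < m" using bsel_prop[OF True] Bw_sub by auto
      hence "otc (Zs (colc z) ?h (bsel (colc z) ?h)) < m" using otc_ex[OF Zs_small[OF zT inj]] by blast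
      thus ?thesis using True unfolding A2_def by auto
    next
      case F2: False
      hence t3: "tg (colc z) z = 3" using False tg_cases[of "colc z" z] by auto
      note g = gam_props[OF zT t3]
      thus ?thesis using t3 e[of "gam z"] unfolding A2_def by auto
    qed
  qed
  show ?thesis using a1 a2 a3 by blast
qed

end

context L28 begin

lemma main: "\<forall>y\<in>T. ht y = hy \<longrightarrow> (\<forall>x\<in>T. strict_map_le x y \<longrightarrow> c x \<noteq> c y)"
proof (induction hy rule: less_induct)
  case (less hy)
  have IH: "\<And>y' x'. y' \<in> T \<Longrightarrow> ht y' < hy \<Longrightarrow> x' \<in> T \<Longrightarrow> strict_map_le x' y' \<Longrightarrow> c x' \<noteq> c y'"
    using less by blast
  show ?case
  proof (intro ballI impI)
    fix y x assume yT: "y \<in> T" and hy: "ht y = hy" and xT: "x \<in> T" and xy: "strict_map_le x y"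
    have injb: "\<xi>1 = \<xi>2" if "\<xi>1 < hy" "\<xi>2 < hy" "c (y |` {..<\<xi>1}) = c (y |` {..<\<xi>2})" for \<xi>1 \<xi>2
    proof (rule ccontr)
      assume ne: "\<xi>1 \<noteq> \<xi>2"
      have gen: "False" if "a1 < a2" "a2 < hy" "c (y |` {..<a1}) = c (y |` {..<a2})" for a1 a2
      proof -
        have "strict_map_le (y |` {..<a1}) (y |` {..<a2})"
          using restr_sml[OF yT that(1)] that(2) hy by simp
        moreover have "ht (y |` {..<a2}) < hy" using ht_restr[OF yT, of a2] that(2) hy by simp
        ultimately show False using IH[OF T_restr[OF yT] _ T_restr[OF yT]] that(3) by blast
      qed
      show False using ne that gen[of \<xi>1 \<xi>2] gen[of \<xi>2 \<xi>1] by (metis linorder_neqE)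
    qed
    have injy: "inj_on (\<lambda>\<xi>. c (y |` {..<\<xi>})) {..<ht y}" using injb hy unfolding inj_on_def by auto
    have sx: "ht x < hy" and xeq: "x = y |` {..<ht x}" using sml_D[OF xT yT xy] hy by auto
    let ?hx = "ht x"
    have xr: "x |` {..<\<xi>} = y |` {..<\<xi>}" if "\<xi> \<le> ?hx" for \<xi>
      using restr_restr[OF that, of y] xeq by metis
    have injx: "inj_on (\<lambda>\<xi>. c (x |` {..<\<xi>})) {..<?hx}"
      using injb sx xr unfolding inj_on_def by (auto simp: less_imp_le)
    have colx: "colc x \<xi> = colc y \<xi>" if "\<xi> < ?hx" for \<xi>
    proof -
      have "\<xi> < hy" using that sx by (rule order.strict_trans)
      thus ?thesis using that xr[of \<xi>] hy by (simp add: colc_def less_imp_le)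
    qed
    have coly: "colc y \<xi> = c (y |` {..<\<xi>})" if "\<xi> < hy" for \<xi>
      using that hy by (simp add: colc_def)
    show "c x \<noteq> c y"
    proof
      assume eqc: "c x = c y"
      let ?cx = "colc x" and ?cy = "colc y"
      have "ENC (tg ?cx x) (A1 ?cx x) (A2 ?cx x) (A3 ?cx x) = ENC (tg ?cy y) (A1 ?cy y) (A2 ?cy y) (A3 ?cy y)"
        using eqc c_eq[OF xT] c_eq[OF yT] by (simp add: Hcol_def)
      moreover have cx3: "A1 ?cx x < m" "A2 ?cx x < m" "A3 ?cx x < m" using comps_lt[OF xT injx] by auto
      moreover have cy3: "A1 ?cy y < m" "A2 ?cy y < m" "A3 ?cy y < m" using comps_lt[OF yT injy] by auto
      ultimately have eqa: "tg ?cx x = tg ?cy y \<and> A1 ?cx x = A1 ?cy y \<and> A2 ?cx x = A2 ?cy y \<and> A3 ?cx x = A3 ?cy y"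
        by (rule ENC_inj)
      hence eqs: "tg ?cx x = tg ?cy y" "A1 ?cx x = A1 ?cy y" "A2 ?cx x = A2 ?cy y" "A3 ?cx x = A3 ?cy y"
        by auto
      consider "tg ?cx x = 0" | "tg ?cx x = 1" | "tg ?cx x = 2" | "tg ?cx x = 3" using tg_cases[of "colc x" x] by auto
      then show False
      proof cases
        case 1
        hence t0y: "tg ?cy y = 0" using eqs by simp
        have nDx: "?hx \<notin> D" and exx: "\<exists>\<delta>\<in>D. \<delta> < ?hx" using 1 unfolding tg_def by (auto split: if_splits)
        have nDy: "hy \<notin> D" and exy: "\<exists>\<delta>\<in>D. \<delta> < hy" using t0y hy unfolding tg_def by (auto split: if_splits)
        have slx: "sig ?hx < ?hx" using sig_lt[OF nDx exx] .
        have sly: "sig hy < hy" using sig_lt[OF nDy exy] .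
        have "?cx (sig ?hx) = ?cy (sig hy)" using eqs(2) 1 t0y hy by (simp add: A1_def)
        hence "c (y |` {..<sig ?hx}) = c (y |` {..<sig hy})"
          using colx[OF slx] coly[of "sig ?hx"] coly[OF sly] slx sx by simp
        hence sig_eq: "sig ?hx = sig hy" using injb slx sx sly by (meson order_less_trans)
        have nob: "\<not> (\<exists>\<delta>\<in>D. ?hx \<le> \<delta> \<and> \<delta> < hy)"
        proof
          assume "\<exists>\<delta>\<in>D. ?hx \<le> \<delta> \<and> \<delta> < hy"
          then obtain \<delta> where "\<delta> \<in> D" "?hx \<le> \<delta>" "\<delta> < hy" by blast
          hence "\<delta> \<le> sig hy" using sig_ub by blast
          thus False using sig_eq slx \<open>?hx \<le> \<delta>\<close> by simp
        qed
        have "e (Mx ?hx) ?hx = e (Mx hy) hy" using eqs(3) 1 t0y hy by (simp add: A2_def)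
        thus False using M_contra[OF sx nob nDx nDy] by blast
      next
        case 2
        hence t1y: "tg ?cy y = 1" using eqs by simp
        have nDx: "?hx \<notin> D" using 2 unfolding tg_def by (auto split: if_splits)
        have nDy: "hy \<notin> D" and exy: "\<not> (\<exists>\<delta>\<in>D. \<delta> < hy)" using t1y hy unfolding tg_def by (auto split: if_splits)
        have nob: "\<not> (\<exists>\<delta>\<in>D. ?hx \<le> \<delta> \<and> \<delta> < hy)" using exy by blast
        have "e (Mx ?hx) ?hx = e (Mx hy) hy" using eqs(3) 2 t1y hy by (simp add: A2_def)
        thus False using M_contra[OF sx nob nDx nDy] by blast
      next
        case 3
        hence t2y: "tg ?cy y = 2" using eqs by simp
        define bb where "bb = bsel ?cy hy"
        have bbx: "bsel ?cx ?hx = bb" using eqs(2) 3 t2y hy by (simp add: A1_def bb_def)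
        have bp: "bb \<in> Bw" "cofinal_in (Zs ?cy hy bb) hy" using bsel_prop[OF t2y] hy by (auto simp: bb_def)
        define Zy where "Zy = Zs ?cy hy bb"
        define Zx where "Zx = Zs ?cx ?hx bb"
        have oeq: "otc Zx = otc Zy" using eqs(3) 3 t2y hy bbx by (simp add: A2_def Zx_def Zy_def bb_def)
        have "\<exists>z\<in>Zy. ?hx \<le> z" using bp(2) sx unfolding cofinal_in_def Zy_def by blast
        define z0 where "z0 = (LEAST z. z \<in> Zy \<and> ?hx \<le> z)"
        have ex': "\<exists>z. z \<in> Zy \<and> ?hx \<le> z" using \<open>\<exists>z\<in>Zy. ?hx \<le> z\<close> by blast
        have z0: "z0 \<in> Zy \<and> ?hx \<le> z0" unfolding z0_def by (rule LeastI_ex[OF ex'])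
        have Zxeq: "Zx = {z\<in>Zy. z < z0}"
        proof (rule set_eqI)
          fix z
          show "z \<in> Zx \<longleftrightarrow> z \<in> {z\<in>Zy. z < z0}"
          proof
            assume "z \<in> Zx"
            hence zl: "z < ?hx" "?cx z < bb" by (auto simp: Zx_def Zs_def)
            hence "z \<in> Zy" using colx[of z] sx by (auto simp: Zy_def Zs_def)
            moreover have "z < z0" using zl z0 by (meson order_less_le_trans)
            ultimately show "z \<in> {z\<in>Zy. z < z0}" by simp
          next
            assume a: "z \<in> {z\<in>Zy. z < z0}"
            hence "\<not> (z \<in> Zy \<and> ?hx \<le> z)" unfolding z0_def using not_less_Least by blast
            hence zl: "z < ?hx" using a by (auto simp: not_le)
            thus "z \<in> Zx" using a colx[of z] by (auto simp: Zx_def Zy_def Zs_def)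
          qed
        qed
        have "bb < m" using bp(1) Bw_sub by blast
        hence Zysm: "|Zy| <o |{..<m}|" unfolding Zy_def using Zs_small[OF yT injy] hy by simp
        have "otc Zx \<noteq> otc Zy" using otc_neq[OF Zysm conjunct1[OF z0] Zxeq] .
        thus False using oeq by simp
      next
        case 4
        hence t3y: "tg ?cy y = 3" using eqs by simp
        note gx = gam_props[OF xT 4] and gy = gam_props[OF yT t3y]
        note Ex = tag3[OF xT 4] and Ey = tag3[OF yT t3y]
        have "?cx (gam x) = ?cy (gam y)" using eqs(2) 4 t3y by (simp add: A1_def)
        have gxh: "gam x < hy" using gx sx by (meson order_less_trans)
        have gyh: "gam y < hy" using gy hy by simp
        have "colc x (gam x) = c (y |` {..<gam x})" using colx[of "gam x"] coly[OF gxh] gx by simp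
        moreover have "colc y (gam y) = c (y |` {..<gam y})" using coly[OF gyh] .
        ultimately have "c (y |` {..<gam x}) = c (y |` {..<gam y})" using \<open>?cx (gam x) = ?cy (gam y)\<close> by simp
        hence geq: "gam x = gam y" using injb[OF gxh gyh] by blast
        define g where "g = gam x"
        have deq: "e g (d (b ?hx)) = e g (d (b hy))" using eqs(3) 4 t3y hy geq by (simp add: A2_def g_def)
        have d1: "d (b ?hx) \<in> {..<g}" using gx by (simp add: g_def)
        have d2: "d (b hy) \<in> {..<g}" using gy geq hy by (simp add: g_def)
        have dd: "d (b ?hx) = d (b hy)" using inj_onD[OF conjunct1[OF e[of g]] deq d1 d2] .
        have Exx: "?hx \<in> D \<inter> E_cf m" using Ex by blast
        have Eyy: "hy \<in> D \<inter> E_cf m" using Ey hy by simp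
        have "b ?hx \<in> level T ?hx" using bd[OF Exx] by blast
        hence bx: "b ?hx \<in> T" "ht (b ?hx) = ?hx" using level_iff by auto
        have "b hy \<in> level T hy" using bd[OF Eyy] by blast
        hence by': "b hy \<in> T" "ht (b hy) = hy" using level_iff by auto
        have lx: "b ?hx |` {..<g} \<in> level T g"
          using level_iff T_restr[OF bx(1)] ht_restr[OF bx(1)] gx bx(2) by (simp add: less_imp_le g_def)
        have ly: "b hy |` {..<g} \<in> level T g"
          using level_iff T_restr[OF by'(1)] ht_restr[OF by'(1)] gy by'(2) geq hy by (simp add: less_imp_le g_def)
        have "idx g (b ?hx |` {..<g}) = idx g (b hy |` {..<g})" using eqs(4) 4 t3y hy geq by (simp add: A3_def g_def)
        hence req: "b ?hx |` {..<g} = b hy |` {..<g}" using inj_onD[OF conjunct1[OF idx[of g]] _ lx ly] by blast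
        have ml: "b ?hx \<subseteq>\<^sub>m b hy"
          unfolding map_le_def
        proof (intro ballI)
          fix a assume "a \<in> dom (b ?hx)"
          hence ahx: "a < ?hx" using T_dom[OF bx(1)] bx(2) by auto
          show "b ?hx a = b hy a"
          proof (cases "a < g")
            case True
            then show ?thesis using fun_cong[OF req, of a] by simp
          next
            case False
            hence ga: "g \<le> a" by simp
            have bxg: "bet x < g" using gx by (simp add: g_def)
            have byg: "bet y < g" using gy geq by (simp add: g_def)
            have nx: "\<not> a \<le> bet x" using bxg ga by simp
            have ny: "\<not> a \<le> bet y" using byg ga by simp
            have ahy: "a < hy" using ahx sx by (rule order.strict_trans)
            have e1: "x a = b ?hx a" using gx ahx nx by blast
            have "\<forall>\<gamma><ht y. y \<gamma> \<noteq> b (ht y) \<gamma> \<longrightarrow> \<gamma> \<le> bet y" using gy by blast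
            hence "\<forall>\<gamma><hy. y \<gamma> \<noteq> b hy \<gamma> \<longrightarrow> \<gamma> \<le> bet y" using hy by simp
            hence e2: "y a = b hy a" using ahy ny by blast
            have "x a = (y |` {..<?hx}) a" using xeq by (rule arg_cong)
            hence "x a = y a" using ahx by simp
            thus ?thesis using e1 e2 by simp
          qed
        qed
        have "b ?hx \<noteq> b hy"
        proof
          assume "b ?hx = b hy"
          hence "ht (b ?hx) = ht (b hy)" by simp
          thus False using bx(2) by'(2) sx by simp
        qed
        hence "strict_map_le (b ?hx) (b hy)" using ml by (simp add: strict_map_le_def)
        thus False using dinj[OF Exx Eyy] dd by blast
      qed
    qed
  qed
qed

lemma chain_inj: "x \<in> T \<Longrightarrow> y \<in> T \<Longrightarrow> strict_map_le x y \<Longrightarrow> c x \<noteq> c y"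
  using main by blast

lemma special_T: "special m T"
proof -
  obtain t where "t \<in> level T m" using str unfolding streamlined_tree_def by blast
  hence tT: "t \<in> T" by (simp add: level_def)
  have "\<not> a < (LEAST a::'k. True)" for a using not_less_Least[of a "\<lambda>_. True"] by blast
  hence emp: "{..<(LEAST a::'k. True)} = {}" by auto
  have eT: "Map.empty \<in> T" using T_restr[OF tT, of "LEAST a::'k. True"] unfolding emp by simp
  define \<A> where "\<A> = (\<lambda>\<eta>. {x\<in>T. c x = \<eta>}) ` {..<m}"
  have P1: "\<forall>x\<in>T. (\<lambda>x. Map.empty) x \<in> T" using eT by simp
  have P2: "\<forall>x\<in>T. (\<exists>y\<in>T. strict_map_le y x) \<longrightarrow> strict_map_le ((\<lambda>x. Map.empty) x) x"
  proof (intro ballI impI)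
    fix x assume "x \<in> T" "\<exists>y\<in>T. strict_map_le y x"
    then obtain y where "y \<in> T" "strict_map_le y x" by blast
    have "x \<noteq> Map.empty"
    proof
      assume "x = Map.empty"
      hence "y \<subseteq>\<^sub>m Map.empty" "y \<noteq> Map.empty" using \<open>strict_map_le y x\<close> by (auto simp: strict_map_le_def)
      thus False using map_le_antisym[OF _ map_le_empty] by blast
    qed
    thus "strict_map_le ((\<lambda>x. Map.empty) x) x" unfolding strict_map_le_def by simp
  qed
  have A1: "card_le \<A> {..<m}" unfolding card_le_def \<A>_def by (rule card_of_image)
  have A2: "\<forall>A\<in>\<A>. antichain_in T A" unfolding \<A>_def antichain_in_def
  proof (rule ballI)
    fix A assume "A \<in> (\<lambda>\<eta>. {x \<in> T. c x = \<eta>}) ` {..<m}"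
    then obtain \<eta> where A: "A = {x \<in> T. c x = \<eta>}" by blast
    have "\<forall>x\<in>A. \<forall>y\<in>A. \<not> strict_map_le x y"
    proof (intro ballI notI)
      fix x y assume "x \<in> A" "y \<in> A" "strict_map_le x y"
      thus False using A chain_inj[of x y] by simp
    qed
    then show "A \<subseteq> T \<and> (\<forall>x\<in>A. \<forall>y\<in>A. \<not> strict_map_le x y)" using A by blast
  qed
  have A3: "T \<subseteq> \<Union> \<A>" unfolding \<A>_def using c_lt by auto
  have P3: "\<forall>z\<in>T. \<exists>\<A>. card_le \<A> {..<m} \<and> (\<forall>A\<in>\<A>. antichain_in T A) \<and>
        {x\<in>T. (\<lambda>x. Map.empty) x = z} \<subseteq> \<Union>\<A>"
    using A1 A2 A3 by blast
  show ?thesis unfolding special_def by (rule exI[of _ "\<lambda>x. Map.empty"]) (use P1 P2 P3 in blast)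
qed

end

theorem lemma2p8:
  fixes m :: "'k::wellorder"
    and T :: "('k \<rightharpoonup> 'v) set"
    and D :: "'k set"
    and b :: "'k \<Rightarrow> ('k \<rightharpoonup> 'v)"
    and d :: "('k \<rightharpoonup> 'v) \<Rightarrow> 'k"
  assumes "is_successor_of TYPE('k) m"
    and "streamlined_tree m T"
    and "coherent (E_cf m) T"
    and "club D"
    and "\<And>\<delta>. \<delta> \<in> D \<inter> E_cf m \<Longrightarrow> b \<delta> \<in> level T \<delta> \<and> d (b \<delta>) < \<delta>"
    and "\<And>\<gamma> \<delta>. \<gamma> \<in> D \<inter> E_cf m \<Longrightarrow> \<delta> \<in> D \<inter> E_cf m \<Longrightarrow>
           strict_map_le (b \<gamma>) (b \<delta>) \<Longrightarrow> d (b \<gamma>) \<noteq> d (b \<delta>)"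
  shows "special m T"
proof -
  have "L28 m T D b d" unfolding L28_def using assms by blast
  thus ?thesis by (rule L28.special_T)
qed

end
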